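(* Let $D$ be an arc-colored strongly connected tournament on $n\geq 3$ vertices. If $c(D)\geq \frac{n(n-1)}{2}-n+3$, then $D$ contains a rainbow triangle.
   Context: A tournament is obtained from $K_n$ by orienting each edge in exactly one direction; it is strongly connected if for every ordered pair of distinct vertices $x,y$ there is a directed path from $x$ to $y$. An arc-coloring is any map $C:A(D)\to\mathbb{N}$; $c(D)$ is the number of distinct colors used on the arcs. A rainbow triangle is a directed cycle of length 3 whose arcs have pairwise distinct colors. *)

theory Defs
  imports Main
begin

definition tournament :: "'a set \<Rightarrow> ('a \<times> 'a) set \<Rightarrow> bool" where
  "tournament V A \<longleftrightarrow> A \<subseteq> V \<times> V \<and> (\<forall>x. (x, x) \<notin> A) \<and>
     (\<forall>x\<in>V. \<forall>y\<in>V. x \<noteq> y \<longrightarrow> ((x, y) \<in> A \<longleftrightarrow> (y, x) \<notin> A))"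

definition strongly_connected :: "'a set \<Rightarrow> ('a \<times> 'a) set \<Rightarrow> bool" where
  "strongly_connected V A \<longleftrightarrow> (\<forall>x\<in>V. \<forall>y\<in>V. x \<noteq> y \<longrightarrow> (x, y) \<in> A\<^sup>+)"

definition num_colors :: "('a \<times> 'a) set \<Rightarrow> ('a \<times> 'a \<Rightarrow> nat) \<Rightarrow> nat" where
  "num_colors A C = card (C ` A)"

definition has_rainbow_triangle :: "('a \<times> 'a) set \<Rightarrow> ('a \<times> 'a \<Rightarrow> nat) \<Rightarrow> bool" where
  "has_rainbow_triangle A C \<longleftrightarrow> (\<exists>x y z. x \<noteq> y \<and> y \<noteq> z \<and> x \<noteq> z \<and>
     (x, y) \<in> A \<and> (y, z) \<in> A \<and> (z, x) \<in> A \<and>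
     C (x, y) \<noteq> C (y, z) \<and> C (y, z) \<noteq> C (z, x) \<and> C (x, y) \<noteq> C (z, x))"

end

theory Submission
  imports Defs
begin

definition cutP :: "'a set \<Rightarrow> ('a \<times> 'a) set \<Rightarrow> bool" where
  "cutP W A \<longleftrightarrow> (\<forall>P. P \<subseteq> W \<longrightarrow> P \<noteq> {} \<longrightarrow> P \<noteq> W \<longrightarrow> (\<exists>a\<in>P. \<exists>b\<in>W - P. (a, b) \<in> A))"

lemma trancl_cross:
  assumes "(a, b) \<in> R\<^sup>+" "a \<in> P" "b \<notin> P"
  shows "\<exists>a' b'. (a', b') \<in> R \<and> a' \<in> P \<and> b' \<notin> P"
  using assms
proof (induction rule: trancl_induct)
  case (base y) then show ?case by blast
next
  case (step y z) then show ?case by (cases "y \<in> P") blast+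
qed

lemma strong_cut:
  assumes "tournament V A" "strongly_connected V A"
  shows "cutP V A"
  unfolding cutP_def
proof (intro allI impI)
  fix P assume P: "P \<subseteq> V" "P \<noteq> {}" "P \<noteq> V"
  then obtain a b where ab: "a \<in> P" "b \<in> V - P" by blast
  have "a \<in> V" "b \<in> V" "a \<noteq> b" using P ab by auto
  with assms(2) have "(a, b) \<in> A\<^sup>+" unfolding strongly_connected_def by blast
  from trancl_cross[OF this ab(1)] ab obtain a' b' where "(a', b') \<in> A" "a' \<in> P" "b' \<notin> P" by blast
  moreover have "A \<subseteq> V \<times> V" using assms(1) unfolding tournament_def by blast
  ultimately show "\<exists>a\<in>P. \<exists>b\<in>V - P. (a, b) \<in> A" by blast
qed

lemma card_union_le:
  assumes "finite S" "finite F"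
    and "(\<exists>e1\<in>F. \<exists>e2\<in>F. e1 \<noteq> e2 \<and> C e1 = C e2) \<or> (\<exists>e\<in>F. C e \<in> S)"
  shows "card (S \<union> C ` F) + 1 \<le> card S + card F"
proof -
  obtain e where e: "e \<in> F" "S \<union> C ` F = S \<union> C ` (F - {e})"
  proof (cases "\<exists>e\<in>F. C e \<in> S")
    case True
    then obtain e where "e \<in> F" "C e \<in> S" by blast
    then have "S \<union> C ` F = S \<union> C ` (F - {e})" by blast
    then show ?thesis using that \<open>e \<in> F\<close> by blast
  next
    case False
    with assms(3) obtain e1 e2 where "e1 \<in> F" "e2 \<in> F" "e1 \<noteq> e2" "C e1 = C e2" by blast
    then have "C e1 \<in> C ` (F - {e1})" by (metis DiffI image_eqI singletonD)
    moreover have "C ` F = insert (C e1) (C ` (F - {e1}))" using \<open>e1 \<in> F\<close> by (metis image_insert insert_Diff)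
    ultimately have "S \<union> C ` F = S \<union> C ` (F - {e1})" by (simp add: insert_absorb)
    then show ?thesis using that \<open>e1 \<in> F\<close> by blast
  qed
  have 1: "card (S \<union> C ` (F - {e})) \<le> card S + card (C ` (F - {e}))" by (rule card_Un_le)
  have 2: "card (C ` (F - {e})) \<le> card (F - {e})" by (rule card_image_le) (use assms in auto)
  have 3: "card (F - {e}) + 1 = card F" using e(1) assms(2)
    using card.remove[of F e] by simp
  show ?thesis unfolding e(2) using 1 2 3 by linarith
qed

lemma norb:
  assumes "\<not> has_rainbow_triangle A C" "x \<noteq> y" "y \<noteq> z" "x \<noteq> z"
    "(x, y) \<in> A" "(y, z) \<in> A" "(z, x) \<in> A"
  shows "C (x, y) = C (y, z) \<or> C (y, z) = C (z, x) \<or> C (x, y) = C (z, x)"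
  using assms unfolding has_rainbow_triangle_def by blast

lemma step1:
  assumes T: "tournament V A" and nr: "\<not> has_rainbow_triangle A C" and fin: "finite V"
    and W: "W \<subseteq> V" "cutP W A" and u: "u \<in> V" "u \<notin> W"
    and a: "a \<in> W" "(u, a) \<in> A" and b: "b \<in> W" "(b, u) \<in> A"
  shows "card (C ` (A \<inter> (insert u W \<times> insert u W))) + 1 \<le> card (C ` (A \<inter> (W \<times> W))) + card W
     \<and> cutP (insert u W) A"
proof
  have irr: "\<And>x. (x, x) \<notin> A" and tt: "\<And>x y. x \<in> V \<Longrightarrow> y \<in> V \<Longrightarrow> x \<noteq> y \<Longrightarrow> (x, y) \<in> A \<longleftrightarrow> (y, x) \<notin> A"
    using T unfolding tournament_def by blast+
  have finW: "finite W" using W fin finite_subset by blast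
  define P where "P = {w \<in> W. (u, w) \<in> A}"
  have "a \<in> P" using a P_def by auto
  have "b \<notin> P" using b u tt[of u b] W unfolding P_def by auto
  then obtain a' b' where ab': "a' \<in> P" "b' \<in> W - P" "(a', b') \<in> A"
    using W(2) \<open>a \<in> P\<close> b unfolding cutP_def P_def by (metis (no_types, lifting) emptyE mem_Collect_eq subsetI)
  have ua': "(u, a') \<in> A" "a' \<in> W" using ab' P_def by auto
  have b'u: "(b', u) \<in> A" "b' \<in> W" using ab' P_def tt[of u b'] u W by auto
  have ne: "u \<noteq> a'" "a' \<noteq> b'" "u \<noteq> b'" using ua' b'u u ab' by auto
  have tri: "C (u, a') = C (a', b') \<or> C (a', b') = C (b', u) \<or> C (u, a') = C (b', u)"
    by (rule norb[OF nr ne ua'(1) ab'(3) b'u(1)])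
  define f where "f = (\<lambda>w. if (u, w) \<in> A then (u, w) else (w, u))"
  define F where "F = f ` W"
  have cF: "card F \<le> card W" unfolding F_def using card_image_le finW by blast
  have inF: "(u, a') \<in> F" "(b', u) \<in> F"
    unfolding F_def f_def using ua' b'u irr tt[of u b'] u W
    by (auto intro!: image_eqI[where x=a'] image_eqI[where x=b'])
  have sub: "A \<inter> (insert u W \<times> insert u W) \<subseteq> (A \<inter> (W \<times> W)) \<union> F"
  proof
    fix e assume e: "e \<in> A \<inter> (insert u W \<times> insert u W)"
    then obtain p q where pq: "e = (p, q)" by (cases e)
    show "e \<in> (A \<inter> (W \<times> W)) \<union> F"
    proof (cases "p = u")
      case True
      then have "q \<in> W" using e pq irr by auto
      then show ?thesis using e pq True unfolding F_def f_def by (auto intro!: image_eqI[where x=q])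
    next
      case False
      then have p: "p \<in> W" using e pq by auto
      show ?thesis
      proof (cases "q = u")
        case True
        then have "(u, p) \<notin> A" using e pq tt[of u p] u W p by auto
        then show ?thesis using e pq True p unfolding F_def f_def by (auto intro!: image_eqI[where x=p])
      qed (use e pq p in auto)
    qed
  qed
  have finE: "finite (C ` (A \<inter> (W \<times> W)))" using finW by auto
  have "(\<exists>e1\<in>F. \<exists>e2\<in>F. e1 \<noteq> e2 \<and> C e1 = C e2) \<or> (\<exists>e\<in>F. C e \<in> C ` (A \<inter> (W \<times> W)))"
    using tri inF ne ua' b'u ab' by (metis (no_types, lifting) IntI SigmaI image_eqI old.prod.inject)
  from card_union_le[OF finE _ this] have
    "card (C ` (A \<inter> (W \<times> W)) \<union> C ` F) + 1 \<le> card (C ` (A \<inter> (W \<times> W))) + card F"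
    using finW F_def by blast
  moreover have "card (C ` (A \<inter> (insert u W \<times> insert u W))) \<le> card (C ` (A \<inter> (W \<times> W)) \<union> C ` F)"
    by (rule card_mono) (use finW F_def sub in auto)
  ultimately show "card (C ` (A \<inter> (insert u W \<times> insert u W))) + 1 \<le> card (C ` (A \<inter> (W \<times> W))) + card W"
    using cF by linarith
next
  show "cutP (insert u W) A" unfolding cutP_def
  proof (intro allI impI)
    fix Q assume Q: "Q \<subseteq> insert u W" "Q \<noteq> {}" "Q \<noteq> insert u W"
    show "\<exists>a\<in>Q. \<exists>b\<in>insert u W - Q. (a, b) \<in> A"
    proof (cases "u \<in> Q")
      case False
      then have QW: "Q \<subseteq> W" using Q by auto
      show ?thesis
      proof (cases "Q = W")
        case True then show ?thesis using b False by auto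
      next
        case False
        then obtain x y where "x \<in> Q" "y \<in> W - Q" "(x, y) \<in> A" using W(2) QW Q unfolding cutP_def by meson
        then show ?thesis by auto
      qed
    next
      case True
      show ?thesis
      proof (cases "Q - {u} = {}")
        case True
        then have "Q = {u}" using \<open>u \<in> Q\<close> by auto
        then show ?thesis using a u by auto
      next
        case False
        have "Q - {u} \<noteq> W" using Q True by auto
        then obtain x y where "x \<in> Q - {u}" "y \<in> W - (Q - {u})" "(x, y) \<in> A"
          using W(2) Q False unfolding cutP_def by (metis Diff_subset_conv insert_is_Un)
        then show ?thesis using True u by auto
      qed
    qed
  qed
qed

lemma step2:
  assumes T: "tournament V A" and nr: "\<not> has_rainbow_triangle A C" and fin: "finite V"
    and W: "W \<subseteq> V" "W \<noteq> {}" "cutP W A" and xy: "x \<in> V" "x \<notin> W" "y \<in> V" "y \<notin> W"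
    and xW: "\<forall>w\<in>W. (x, w) \<in> A" and Wy: "\<forall>w\<in>W. (w, y) \<in> A" and yx: "(y, x) \<in> A"
  shows "card (C ` (A \<inter> (insert x (insert y W) \<times> insert x (insert y W)))) \<le> card (C ` (A \<inter> (W \<times> W))) + card W + 1
     \<and> cutP (insert x (insert y W)) A"
proof
  have irr: "\<And>x. (x, x) \<notin> A" and tt: "\<And>x y. x \<in> V \<Longrightarrow> y \<in> V \<Longrightarrow> x \<noteq> y \<Longrightarrow> (x, y) \<in> A \<longleftrightarrow> (y, x) \<notin> A"
    using T unfolding tournament_def by blast+
  have finW: "finite W" using W fin finite_subset by blast
  have xny: "x \<noteq> y" using yx irr by auto
  define g where "g = (\<lambda>w. if C (x, w) = C (y, x) then C (w, y) else C (x, w))"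
  have tri: "\<And>w. w \<in> W \<Longrightarrow> C (w, y) = C (y, x) \<or> C (y, x) = C (x, w) \<or> C (w, y) = C (x, w)"
  proof -
    fix w assume w: "w \<in> W"
    have ne: "w \<noteq> y" "y \<noteq> x" "w \<noteq> x" using w xy xny by auto
    show "C (w, y) = C (y, x) \<or> C (y, x) = C (x, w) \<or> C (w, y) = C (x, w)"
      by (rule norb[OF nr ne]) (use w Wy xW yx in auto)
  qed
  have sub: "C ` (A \<inter> (insert x (insert y W) \<times> insert x (insert y W))) \<subseteq>
      C ` (A \<inter> (W \<times> W)) \<union> insert (C (y, x)) (g ` W)"
  proof
    fix c assume "c \<in> C ` (A \<inter> (insert x (insert y W) \<times> insert x (insert y W)))"
    then obtain p q where pq: "(p, q) \<in> A" "p \<in> insert x (insert y W)" "q \<in> insert x (insert y W)" "c = C (p, q)"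
      by auto
    show "c \<in> C ` (A \<inter> (W \<times> W)) \<union> insert (C (y, x)) (g ` W)"
    proof (cases "p \<in> W \<and> q \<in> W")
      case True then show ?thesis using pq by auto
    next
      case False
      have nxy: "(x, y) \<notin> A" using tt[of x y] xy xny yx by auto
      have nwx: "\<And>w. w \<in> W \<Longrightarrow> (w, x) \<notin> A" using tt xW xy W by blast
      have nyw: "\<And>w. w \<in> W \<Longrightarrow> (y, w) \<notin> A" using tt Wy xy W by blast
      have "(p = y \<and> q = x) \<or> (p = x \<and> q \<in> W) \<or> (p \<in> W \<and> q = y)"
        using False pq irr nxy nwx nyw by auto
      then show ?thesis
      proof (elim disjE conjE)
        assume "p = y" "q = x" then show ?thesis using pq by auto
      next
        assume "p = x" "q \<in> W"
        then show ?thesis using pq tri[of q] unfolding g_def by (cases "C (x, q) = C (y, x)") force+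
      next
        assume "p \<in> W" "q = y"
        then show ?thesis using pq tri[of p] unfolding g_def by (cases "C (x, p) = C (y, x)") force+
      qed
    qed
  qed
  have "card (C ` (A \<inter> (insert x (insert y W) \<times> insert x (insert y W)))) \<le>
      card (C ` (A \<inter> (W \<times> W)) \<union> insert (C (y, x)) (g ` W))"
    by (rule card_mono[OF _ sub]) (use finW in auto)
  also have "\<dots> \<le> card (C ` (A \<inter> (W \<times> W))) + card (insert (C (y, x)) (g ` W))"
    by (rule card_Un_le)
  also have "card (insert (C (y, x)) (g ` W)) \<le> card (g ` W) + 1"
    by (simp add: card_insert_le_m1 finW card_insert_if)
  also have "card (g ` W) \<le> card W" using finW by (rule card_image_le)
  finally show "card (C ` (A \<inter> (insert x (insert y W) \<times> insert x (insert y W)))) \<le> card (C ` (A \<inter> (W \<times> W))) + card W + 1"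
    by linarith
next
  obtain w0 where w0: "w0 \<in> W" using W by auto
  show "cutP (insert x (insert y W)) A" unfolding cutP_def
  proof (intro allI impI)
    fix Q assume Q: "Q \<subseteq> insert x (insert y W)" "Q \<noteq> {}" "Q \<noteq> insert x (insert y W)"
    show "\<exists>a\<in>Q. \<exists>b\<in>insert x (insert y W) - Q. (a, b) \<in> A"
    proof (cases "Q \<inter> W \<noteq> {} \<and> Q \<inter> W \<noteq> W")
      case True
      then obtain a b where "a \<in> Q \<inter> W" "b \<in> W - (Q \<inter> W)" "(a, b) \<in> A"
        using W(3) unfolding cutP_def by (meson inf_le2)
      then show ?thesis by auto
    next
      case False
      then consider "W \<subseteq> Q" | "Q \<inter> W = {}" by blast
      then show ?thesis
      proof cases
        case 1
        show ?thesis
        proof (cases "y \<in> Q")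
          case False then show ?thesis using 1 w0 Wy by blast
        next
          case True
          then have "x \<notin> Q" using Q 1 by auto
          then show ?thesis using True yx by blast
        qed
      next
        case 2
        show ?thesis
        proof (cases "x \<in> Q")
          case True then show ?thesis using 2 w0 xW by blast
        next
          case False
          then have "Q = {y}" using Q 2 by auto
          then show ?thesis using yx False \<open>Q = {y}\<close> by blast
        qed
      qed
    qed
  qed
qed

lemma arith1: "(c1::nat) + 1 \<le> c0 + m \<Longrightarrow> 2*c0 + 3*m \<le> m*m + 4 \<Longrightarrow> 2*c1 + 3*(m+1) \<le> (m+1)*(m+1) + 4"
  by (simp add: algebra_simps)
lemma arith2: "(c1::nat) \<le> c0 + m + 1 \<Longrightarrow> 2*c0 + 3*m \<le> m*m + 4 \<Longrightarrow> m \<ge> 2 \<Longrightarrow> 2*c1 + 3*(m+2) \<le> (m+2)*(m+2) + 4"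
  by (simp add: algebra_simps)

lemma ev2: "2 * ((n::nat) * (n - 1) div 2) = n * (n - 1)"
proof -
  have "even (n * (n - 1))" by (cases n) auto
  then show ?thesis by simp
qed

lemma fin_arith: "2 * t = a \<Longrightarrow> a \<ge> n * 2 \<Longrightarrow> a + n = b \<Longrightarrow> 2 * c + 3 * n \<le> b + 4 \<Longrightarrow> c \<ge> t - n + 3 \<Longrightarrow> (n::nat) \<ge> 3 \<Longrightarrow> False"
  by linarith

theorem theorem4:
  fixes V :: "'a set" and A :: "('a \<times> 'a) set" and C :: "'a \<times> 'a \<Rightarrow> nat" and n :: nat
  assumes "finite V" and "card V = n" and "n \<ge> 3"
    and "tournament V A" and "strongly_connected V A"
    and "num_colors A C \<ge> n * (n - 1) div 2 - n + 3"
  shows "has_rainbow_triangle A C"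
proof (rule ccontr)
  assume nr: "\<not> has_rainbow_triangle A C"
  note fin = assms(1) and T = assms(4)
  have irr: "\<And>x. (x, x) \<notin> A" and tt: "\<And>x y. x \<in> V \<Longrightarrow> y \<in> V \<Longrightarrow> x \<noteq> y \<Longrightarrow> (x, y) \<in> A \<longleftrightarrow> (y, x) \<notin> A"
    and AV: "A \<subseteq> V \<times> V"
    using T unfolding tournament_def by blast+
  have cV: "cutP V A" using strong_cut assms(4,5) by blast
  define c where "c = (\<lambda>W. card (C ` (A \<inter> (W \<times> W))))"
  define S where "S = {W. W \<subseteq> V \<and> W \<noteq> {} \<and> cutP W A \<and> 2 * c W + 3 * card W \<le> card W * card W + 4}"
  have "V \<noteq> {}" using assms(2,3) by auto
  then obtain v0 where v0: "v0 \<in> V" by auto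
  have "A \<inter> ({v0} \<times> {v0}) = {}" using irr by auto
  then have "{v0} \<in> S" unfolding S_def c_def cutP_def using v0 by auto
  have "S \<subseteq> Pow V" unfolding S_def by blast
  then have finS: "finite S" using fin by (meson finite_Pow_iff finite_subset)
  define k where "k = Max (card ` S)"
  have "k \<in> card ` S" unfolding k_def using finS \<open>{v0} \<in> S\<close> by (intro Max_in) auto
  then obtain W where WS: "W \<in> S" and cW: "card W = k" by auto
  have maxW: "\<And>W'. W' \<in> S \<Longrightarrow> card W' \<le> card W"
  proof -
    fix W' assume "W' \<in> S"
    then have "card W' \<le> Max (card ` S)" using finS by (intro Max_ge) auto
    then show "card W' \<le> card W" using cW k_def by simp
  qed
  have W: "W \<subseteq> V" "W \<noteq> {}" "cutP W A" "2 * c W + 3 * card W \<le> card W * card W + 4"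
    using WS unfolding S_def by auto
  have finW: "finite W" using W fin finite_subset by blast
  have "W = V"
  proof (rule ccontr)
    assume WV: "W \<noteq> V"
    show False
    proof (cases "\<exists>u\<in>V - W. \<exists>a\<in>W. \<exists>b\<in>W. (u, a) \<in> A \<and> (b, u) \<in> A")
      case True
      then obtain u a b where u: "u \<in> V" "u \<notin> W" and ab: "a \<in> W" "b \<in> W" "(u, a) \<in> A" "(b, u) \<in> A" by blast
      from step1[OF T nr fin W(1) W(3) u ab(1) ab(3) ab(2) ab(4)]
      have s1: "c (insert u W) + 1 \<le> c W + card W" "cutP (insert u W) A" unfolding c_def by auto
      have ci: "card (insert u W) = card W + 1" using u finW by simp
      have "2 * c (insert u W) + 3 * card (insert u W) \<le> card (insert u W) * card (insert u W) + 4"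
        unfolding ci using arith1[OF s1(1) W(4)] .
      then have iS: "insert u W \<in> S" unfolding S_def using s1 u W by auto
      show False using maxW[OF iS] ci by simp
    next
      case False
      then have nomix: "\<And>u a b. u \<in> V \<Longrightarrow> u \<notin> W \<Longrightarrow> a \<in> W \<Longrightarrow> b \<in> W \<Longrightarrow> (u, a) \<in> A \<Longrightarrow> (b, u) \<notin> A" by blast
      define Y where "Y = {u \<in> V - W. \<forall>w\<in>W. (w, u) \<in> A}"
      obtain w1 u1 where "w1 \<in> W" "u1 \<in> V - W" "(w1, u1) \<in> A" using cV[unfolded cutP_def, rule_format, OF W(1) W(2) WV] by blast
      have "u1 \<in> Y"
        unfolding Y_def using \<open>u1 \<in> V - W\<close>
      proof (clarsimp)
        fix w assume "u1 \<in> V" "u1 \<notin> W" "w \<in> W"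
        then show "(w, u1) \<in> A" using nomix[of u1 w w1] tt[of w u1] \<open>w1 \<in> W\<close> \<open>(w1, u1) \<in> A\<close> W(1) by auto
      qed
      have "Y \<noteq> V"
      proof
        assume YV: "Y = V"
        obtain w where w: "w \<in> W" using W(2) by blast
        then have "w \<in> Y" using W(1) YV by blast
        then show False using w unfolding Y_def by blast
      qed
      then obtain y z where yz: "y \<in> Y" "z \<in> V - Y" "(y, z) \<in> A"
      proof -
        have "Y \<subseteq> V" "Y \<noteq> {}" using \<open>u1 \<in> Y\<close> unfolding Y_def by auto
        from cV[unfolded cutP_def, rule_format, OF this \<open>Y \<noteq> V\<close>] show ?thesis using that by blast
      qed
      have y: "y \<in> V" "y \<notin> W" "\<forall>w\<in>W. (w, y) \<in> A" using yz Y_def by auto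
      have "z \<notin> W" using yz y tt[of z y] W(1) by auto
      moreover have z: "z \<in> V" using yz by auto
      ultimately obtain w2 where "w2 \<in> W" "(w2, z) \<notin> A" using yz(2) unfolding Y_def by auto
      then have "(z, w2) \<in> A" using tt[of z w2] z \<open>z \<notin> W\<close> W(1) by auto
      have xW: "\<forall>w\<in>W. (z, w) \<in> A"
      proof
        fix w assume "w \<in> W"
        show "(z, w) \<in> A"
        proof (rule ccontr)
          assume "(z, w) \<notin> A"
          then have "(w, z) \<in> A" using tt[of z w] z \<open>z \<notin> W\<close> \<open>w \<in> W\<close> W(1) by auto
          then show False using nomix[OF z \<open>z \<notin> W\<close> \<open>w2 \<in> W\<close> \<open>w \<in> W\<close> \<open>(z, w2) \<in> A\<close>] by simp
        qed
      qed
      from step2[OF T nr fin W(1) W(2) W(3) z \<open>z \<notin> W\<close> y(1) y(2) xW y(3) yz(3)]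
      have s2: "c (insert z (insert y W)) \<le> c W + card W + 1" "cutP (insert z (insert y W)) A"
        unfolding c_def by auto
      have "z \<noteq> y" using yz irr by auto
      then have ci: "card (insert z (insert y W)) = card W + 2" using y z \<open>z \<notin> W\<close> finW by simp
      have "2 * c (insert z (insert y W)) + 3 * card (insert z (insert y W))
          \<le> card (insert z (insert y W)) * card (insert z (insert y W)) + 4"
      proof (cases "card W = 1")
        case True
        then obtain w where "W = {w}" using card_1_singletonE by blast
        then have "c W = 0" unfolding c_def using irr by auto
        then show ?thesis unfolding ci using s2(1) True by simp
      next
        case False
        then have "card W \<ge> 2" using W(2) finW card_gt_0_iff[of W] by linarith
        then show ?thesis unfolding ci using arith2[OF s2(1) W(4)] by simp
      qed
      then have iS: "insert z (insert y W) \<in> S" unfolding S_def using s2 y z W by auto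
      show False using maxW[OF iS] ci by simp
    qed
  qed
  have cA: "c V = num_colors A C" unfolding c_def num_colors_def using AV by (simp add: Int_absorb2)
  define t where "t = n * (n - 1) div 2"
  have ev: "2 * t = n * (n - 1)" unfolding t_def by (rule ev2)
  have "n * (n - 1) \<ge> n * 2" using assms(3) by (intro mult_le_mono) auto
  moreover have "n * (n - 1) + n = n * n" using assms(3)
    by (cases n) (auto simp: algebra_simps)
  moreover have "2 * c V + 3 * n \<le> n * n + 4" using W(4) \<open>W = V\<close> assms(2) by simp
  moreover have "c V \<ge> t - n + 3" using cA assms(6) t_def by simp
  ultimately show False using ev assms(3) fin_arith by blast
qed

end
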